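(* Let $S$ be an additively reduced semidomain and $G$ a torsion-free abelian group. If a nonzero $f=\sum_{i=0}^\infty s_ix^{g_i}\in S[\![G]\!]$ satisfies $g_1-g_0<g_{i+1}-g_i$ for every $i\in\mathbb{N}$ (i.e. every $i\ge1$), then $f$ is monolithic.
   Context: A semidomain is a subsemiring (containing $0$ and $1$) of an integral domain. $S$ is additively reduced if $0$ is the only invertible element of $(S,+)$. $G$ carries a fixed total order compatible with addition. $S[\![G]\!]=\{\sum_{i=0}^\infty s_ix^{g_i} : s_i\in S,\ g_i\in G,\ g_i<g_{i+1}\}$ with operations defined as for polynomials; elements are written so that $s_i=0$ implies $s_{i+1}=0$; $\operatorname{supp}(f)=\{g_i: s_i\neq0\}$. A nonzero $f$ is monolithic if $f=pq$ with $p,q\in S[\![G]\!]$ implies one of $p,q$ is a monomial $sx^g$. *)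

theory Defs
  imports Main
begin

definition semidomain :: "'a::idom set \<Rightarrow> bool" where
  "semidomain S \<longleftrightarrow> 0 \<in> S \<and> 1 \<in> S \<and>
     (\<forall>a\<in>S. \<forall>b\<in>S. a + b \<in> S) \<and> (\<forall>a\<in>S. \<forall>b\<in>S. a * b \<in> S)"

definition add_reduced :: "'a::idom set \<Rightarrow> bool" where
  "add_reduced S \<longleftrightarrow> (\<forall>a\<in>S. (\<exists>b\<in>S. a + b = 0) \<longrightarrow> a = 0)"

text \<open>The formal sum  sum_i s_i x^(g_i)  (g strictly increasing), as its coefficient function.\<close>
definition series_of :: "(nat \<Rightarrow> 'a::zero) \<Rightarrow> (nat \<Rightarrow> 'g) \<Rightarrow> 'g \<Rightarrow> 'a" where
  "series_of s g = (\<lambda>h. if \<exists>i. g i = h then s (THE i. g i = h) else 0)"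

definition series_set :: "'a::idom set \<Rightarrow> ('g::linordered_ab_group_add \<Rightarrow> 'a) set" where
  "series_set S = {series_of s g | s g. (\<forall>i. s i \<in> S) \<and> strict_mono g \<and>
                      (\<forall>i. s i = 0 \<longrightarrow> s (Suc i) = 0)}"

definition series_mult :: "('g::linordered_ab_group_add \<Rightarrow> 'a::idom) \<Rightarrow> ('g \<Rightarrow> 'a) \<Rightarrow> 'g \<Rightarrow> 'a" where
  "series_mult p q = (\<lambda>h. \<Sum>(a,b)\<in>{(a,b). a + b = h \<and> p a \<noteq> 0 \<and> q b \<noteq> 0}. p a * q b)"

definition monomial_in :: "'a::idom set \<Rightarrow> ('g \<Rightarrow> 'a) \<Rightarrow> bool" where
  "monomial_in S p \<longleftrightarrow> (\<exists>c\<in>S. \<exists>g0. p = (\<lambda>h. if h = g0 then c else 0))"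

definition monolithic :: "'a::idom set \<Rightarrow> ('g::linordered_ab_group_add \<Rightarrow> 'a) \<Rightarrow> bool" where
  "monolithic S f \<longleftrightarrow> f \<noteq> (\<lambda>_. 0) \<and>
     (\<forall>p\<in>series_set S. \<forall>q\<in>series_set S. f = series_mult p q \<longrightarrow>
        monomial_in S p \<or> monomial_in S q)"

end

theory Submission
  imports Defs
begin

lemma sum_nz:
  assumes sd: "semidomain S" and ar: "add_reduced S" and fin: "finite F"
    and h: "\<forall>x\<in>F. h x \<in> S \<and> h x \<noteq> 0"
  shows "sum h F \<in> S \<and> (F \<noteq> {} \<longrightarrow> sum h F \<noteq> 0)"
  using fin h
proof (induction F rule: finite_induct)
  case empty
  then show ?case using sd by (simp add: semidomain_def)
next
  case (insert x F)
  then have hx: "h x \<in> S" "h x \<noteq> 0" and IH: "sum h F \<in> S" "F \<noteq> {} \<longrightarrow> sum h F \<noteq> 0" by auto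
  have s: "sum h (insert x F) = h x + sum h F" using insert by simp
  have "h x + sum h F \<in> S" using sd hx IH by (simp add: semidomain_def)
  moreover have "h x + sum h F \<noteq> 0"
    using ar hx IH unfolding add_reduced_def by blast
  ultimately show ?case using s by simp
qed

lemma mult_nz:
  assumes sd: "semidomain S" and ar: "add_reduced S"
    and pS: "\<forall>h. p h \<in> S" and qS: "\<forall>h. q h \<in> S"
    and fin: "finite {(a,b). a + b = h \<and> p a \<noteq> 0 \<and> q b \<noteq> 0}"
    and ne: "a0 + b0 = h" "p a0 \<noteq> 0" "q b0 \<noteq> 0"
  shows "series_mult p q h \<noteq> 0"
proof -
  let ?P = "{(a,b). a + b = h \<and> p a \<noteq> 0 \<and> q b \<noteq> 0}"
  have "\<forall>x\<in>?P. (case x of (a,b) \<Rightarrow> p a * q b) \<in> S \<and> (case x of (a,b) \<Rightarrow> p a * q b) \<noteq> 0"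
    using sd pS qS by (auto simp: semidomain_def)
  moreover have "?P \<noteq> {}" using ne by auto
  ultimately show ?thesis using sum_nz[OF sd ar fin] unfolding series_mult_def by blast
qed

lemma mult_supp:
  assumes "series_mult p q h \<noteq> 0"
  shows "\<exists>a b. a + b = h \<and> p a \<noteq> 0 \<and> q b \<noteq> 0"
proof (rule ccontr)
  assume "\<not> ?thesis"
  then have "{(a,b). a + b = h \<and> p a \<noteq> 0 \<and> q b \<noteq> 0} = {}" by auto
  then show False using assms unfolding series_mult_def by (metis sum.empty)
qed

lemma mult_comm: "series_mult p q = series_mult (q::'g::linordered_ab_group_add \<Rightarrow> 'a::idom) p"
proof
  fix h
  show "series_mult p q h = series_mult q p h"
    unfolding series_mult_def
    by (rule sum.reindex_bij_witness[of _ prod.swap prod.swap]) (auto simp: add.commute mult.commute)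
qed

lemma series_of_at:
  assumes "strict_mono g"
  shows "series_of s g (g i) = s i"
proof -
  have "inj g" using assms strict_mono_imp_inj_on by blast
  then have "(THE j. g j = g i) = i" by (auto dest: injD)
  then show ?thesis unfolding series_of_def by auto
qed

lemma series_of_nz:
  assumes "strict_mono g"
  shows "series_of s g h \<noteq> 0 \<longleftrightarrow> (\<exists>i. g i = h \<and> s i \<noteq> 0)"
proof
  assume "series_of s g h \<noteq> 0"
  then obtain i where "g i = h" unfolding series_of_def by (auto split: if_splits)
  then show "\<exists>i. g i = h \<and> s i \<noteq> 0" using series_of_at[OF assms, of s i] \<open>series_of s g h \<noteq> 0\<close> by auto
next
  assume "\<exists>i. g i = h \<and> s i \<noteq> 0"
  then show "series_of s g h \<noteq> 0" using series_of_at[OF assms, of s] by auto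
qed

lemma down:
  assumes "\<forall>i. s i = 0 \<longrightarrow> s (Suc i) = 0" "s i \<noteq> 0" "j \<le> i"
  shows "s j \<noteq> 0"
  using assms(3,2)
proof (induction i)
  case 0 then show ?case by simp
next
  case (Suc i)
  then show ?case using assms(1) by (cases "j = Suc i") auto
qed

lemma lt_from_eq: fixes a::"'g::linordered_ab_group_add"
  shows "a + b = c + d \<Longrightarrow> d < b \<Longrightarrow> a < c"
  by (metis add_less_le_mono add_less_cancel_left add.commute not_le order_less_irrefl add_le_less_mono)
lemma eq_from_le: fixes a::"'g::linordered_ab_group_add"
  shows "a + b = c + d \<Longrightarrow> c \<le> a \<Longrightarrow> d \<le> b \<Longrightarrow> a = c \<and> b = d"
  by (metis add_le_less_mono add_less_le_mono order_le_less order_less_irrefl)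

lemma core:
  fixes p q :: "'g::linordered_ab_group_add \<Rightarrow> 'a::idom"
  assumes sd: "semidomain S" and ar: "add_reduced S"
    and pS: "\<forall>h. p h \<in> S" and qS: "\<forall>h. q h \<in> S"
    and u: "u0 < u1" "p u0 \<noteq> 0" "p u1 \<noteq> 0" "\<forall>x. p x \<noteq> 0 \<longrightarrow> u0 \<le> x"
       "\<forall>x. p x \<noteq> 0 \<longrightarrow> x < u1 \<longrightarrow> x = u0"
    and v: "v0 < v1" "q v0 \<noteq> 0" "q v1 \<noteq> 0" "\<forall>x. q x \<noteq> 0 \<longrightarrow> v0 \<le> x"
       "\<forall>x. q x \<noteq> 0 \<longrightarrow> x < v1 \<longrightarrow> x = v0"
    and d: "u1 - u0 \<le> v1 - v0"
    and f: "series_of s g = series_mult p q"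
    and g: "strict_mono g" and sz: "\<forall>i. s i = 0 \<longrightarrow> s (Suc i) = 0"
    and s0: "series_of s g \<noteq> (\<lambda>_. 0)"
    and gap: "\<forall>i\<ge>1. g 1 - g 0 < g (Suc i) - g i"
  shows False
proof -
  define A where "A = u0 + v0"
  define B where "B = u1 + v0"
  define C where "C = u0 + v1"
  define D where "D = u1 + v1"
  have fz: "\<And>h. series_of s g h \<noteq> 0 \<longleftrightarrow> (\<exists>i. g i = h \<and> s i \<noteq> 0)"
    using series_of_nz[OF g] by blast
  have sup: "\<And>h. series_of s g h \<noteq> 0 \<Longrightarrow> \<exists>a b. a + b = h \<and> p a \<noteq> 0 \<and> q b \<noteq> 0"
    using mult_supp[of p q] f by simp
  have nz: "\<And>h a0 b0. finite {(a,b). a + b = h \<and> p a \<noteq> 0 \<and> q b \<noteq> 0} \<Longrightarrow> a0 + b0 = h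
      \<Longrightarrow> p a0 \<noteq> 0 \<Longrightarrow> q b0 \<noteq> 0 \<Longrightarrow> series_of s g h \<noteq> 0"
    using mult_nz[OF sd ar pS qS] f by simp
  have finB: "finite {(a,b). a + b = B \<and> p a \<noteq> 0 \<and> q b \<noteq> 0}"
  proof (rule finite_subset[of _ "{(u1,v0),(u0, B - u0)}"])
    show "{(a,b). a + b = B \<and> p a \<noteq> 0 \<and> q b \<noteq> 0} \<subseteq> {(u1,v0),(u0, B - u0)}"
    proof
      fix x assume "x \<in> {(a,b). a + b = B \<and> p a \<noteq> 0 \<and> q b \<noteq> 0}"
      then obtain a b where x: "x = (a,b)" and h: "a + b = B" "p a \<noteq> 0" "q b \<noteq> 0" by auto
      have "(a,b) = (u1,v0) \<or> (a,b) = (u0, B - u0)"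
      proof (cases "b = v0")
        case True then show ?thesis using h B_def by simp
      next
        case False
        then have "v0 < b" using v h order_le_less by blast
        then have "a < u1" using h B_def lt_from_eq by blast
        then have "a = u0" using u h by blast
        then show ?thesis using h by (simp add: eq_diff_eq add.commute)
      qed
      then show "x \<in> {(u1,v0),(u0, B - u0)}" using x by simp
    qed
  qed simp
  have finC: "finite {(a,b). a + b = C \<and> p a \<noteq> 0 \<and> q b \<noteq> 0}"
  proof (rule finite_subset[of _ "{(u0,v1),(C - v0, v0)}"])
    show "{(a,b). a + b = C \<and> p a \<noteq> 0 \<and> q b \<noteq> 0} \<subseteq> {(u0,v1),(C - v0, v0)}"
    proof
      fix x assume "x \<in> {(a,b). a + b = C \<and> p a \<noteq> 0 \<and> q b \<noteq> 0}"
      then obtain a b where x: "x = (a,b)" and h: "a + b = C" "p a \<noteq> 0" "q b \<noteq> 0" by auto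
      have "(a,b) = (u0,v1) \<or> (a,b) = (C - v0, v0)"
      proof (cases "a = u0")
        case True then show ?thesis using h C_def by simp
      next
        case False
        then have "u0 < a" using u h order_le_less by blast
        then have "b < v1" using h C_def lt_from_eq[of b a v1 u0] by (simp add: add.commute)
        then have "b = v0" using v h by blast
        then show ?thesis using h by (simp add: eq_diff_eq)
      qed
      then show "x \<in> {(u0,v1),(C - v0, v0)}" using x by simp
    qed
  qed simp
  have finD: "finite {(a,b). a + b = D \<and> p a \<noteq> 0 \<and> q b \<noteq> 0}"
  proof (rule finite_subset[of _ "{(u1,v1),(u0, D - u0),(D - v0, v0)}"])
    show "{(a,b). a + b = D \<and> p a \<noteq> 0 \<and> q b \<noteq> 0} \<subseteq> {(u1,v1),(u0, D - u0),(D - v0, v0)}"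
    proof
      fix x assume "x \<in> {(a,b). a + b = D \<and> p a \<noteq> 0 \<and> q b \<noteq> 0}"
      then obtain a b where x: "x = (a,b)" and h: "a + b = D" "p a \<noteq> 0" "q b \<noteq> 0" by auto
      have "(a,b) = (u1,v1) \<or> (a,b) = (u0, D - u0) \<or> (a,b) = (D - v0, v0)"
      proof (cases "a = u0")
        case True then show ?thesis using h by (simp add: eq_diff_eq add.commute)
      next
        case F1: False
        then have a1: "u1 \<le> a" using u h not_le by blast
        show ?thesis
        proof (cases "b = v0")
          case True then show ?thesis using h by (simp add: eq_diff_eq)
        next
          case False
          then have "v1 \<le> b" using v h not_le by blast
          then have "a = u1 \<and> b = v1" using a1 h D_def eq_from_le by blast
          then show ?thesis by simp
        qed
      qed
      then show "x \<in> {(u1,v1),(u0, D - u0),(D - v0, v0)}" using x by simp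
    qed
  qed simp
  have lowA: "A \<le> a + b" if "p a \<noteq> 0" "q b \<noteq> 0" for a b
  proof -
    have "u0 \<le> a" "v0 \<le> b" using u(4) v(4) that by blast+
    then show ?thesis unfolding A_def by (rule add_mono)
  qed
  have lowB: "\<And>a b. p a \<noteq> 0 \<Longrightarrow> q b \<noteq> 0 \<Longrightarrow> a + b \<noteq> A \<Longrightarrow> B \<le> a + b"
  proof -
    fix a b assume h: "p a \<noteq> 0" "q b \<noteq> 0" "a + b \<noteq> A"
    then have "a \<noteq> u0 \<or> b \<noteq> v0" using A_def by auto
    then show "B \<le> a + b"
    proof
      assume "a \<noteq> u0" then have "u1 \<le> a" using u(5) h not_le by blast
      moreover have "v0 \<le> b" using v(4) h by blast
      ultimately show ?thesis unfolding B_def by (rule add_mono)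
    next
      assume "b \<noteq> v0" then have "v1 \<le> b" using v(5) h not_le by blast
      moreover have "u0 \<le> a" using u h by blast
      ultimately have "C \<le> a + b" using C_def by (simp add: add_mono)
      moreover have "B \<le> C" using d B_def C_def by (simp add: algebra_simps)
      ultimately show ?thesis by simp
    qed
  qed
  have fB: "series_of s g B \<noteq> 0" using nz[OF finB, of u1 v0] u v B_def by blast
  have fC: "series_of s g C \<noteq> 0" using nz[OF finC, of u0 v1] u v C_def by blast
  have fD: "series_of s g D \<noteq> 0" using nz[OF finD, of u1 v1] u v D_def by blast
  obtain i where "s i \<noteq> 0" using s0 fz by fastforce
  then have s0': "s 0 \<noteq> 0" using down[OF sz] by blast
  then have "series_of s g (g 0) \<noteq> 0" using fz by blast
  then obtain a b where ab: "a + b = g 0" "p a \<noteq> 0" "q b \<noteq> 0" using sup by blast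
  have gA: "A \<le> g 0" using lowA[OF ab(2,3)] ab(1) by simp
  have "g 0 \<le> A"
  proof -
    obtain j where "g j = A" "s j \<noteq> 0"
    proof -
      have "series_of s g A \<noteq> 0"
      proof (rule nz[of A u0 v0])
        show "finite {(a,b). a + b = A \<and> p a \<noteq> 0 \<and> q b \<noteq> 0}"
        proof (rule finite_subset[of _ "{(u0,v0)}"])
          show "{(a,b). a + b = A \<and> p a \<noteq> 0 \<and> q b \<noteq> 0} \<subseteq> {(u0,v0)}"
          proof
            fix x assume "x \<in> {(a,b). a + b = A \<and> p a \<noteq> 0 \<and> q b \<noteq> 0}"
            then obtain a b where x: "x = (a,b)" and h: "a + b = A" "p a \<noteq> 0" "q b \<noteq> 0" by auto
            have "u0 \<le> a" "v0 \<le> b" using u(4) v(4) h by blast+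
            then have "a = u0 \<and> b = v0" using h A_def eq_from_le by blast
            then show "x \<in> {(u0,v0)}" using x by simp
          qed
        qed simp
      qed (use A_def u(2) v(2) in simp_all)
      then show ?thesis using that fz by blast
    qed
    then show ?thesis using g by (metis le0 strict_mono_less_eq)
  qed
  then have g0: "g 0 = A" using gA by simp
  have AB: "A < B" using A_def B_def u(1) by simp
  obtain k where k: "g k = B" "s k \<noteq> 0" using fB fz by blast
  have "k \<noteq> 0" using k g0 AB by (metis order_less_irrefl)
  then have "s 1 \<noteq> 0" using down[OF sz k(2)] by simp
  then have "series_of s g (g 1) \<noteq> 0" using fz by blast
  then obtain a1 b1 where ab1: "a1 + b1 = g 1" "p a1 \<noteq> 0" "q b1 \<noteq> 0" using sup by blast
  have "g 0 < g 1" using g by (simp add: strict_mono_def)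
  then have "a1 + b1 \<noteq> A" using gA ab1 by simp
  then have g1B: "B \<le> g 1" using lowB[OF ab1(2,3)] ab1(1) by simp
  have "g 1 \<le> g k" using g \<open>k \<noteq> 0\<close> by (simp add: strict_mono_less_eq)
  then have g1: "g 1 = B" using g1B k by simp
  have delta: "g 1 - g 0 = u1 - u0" using g0 g1 A_def B_def by (simp add: algebra_simps)
  obtain k' where k': "g k' = C" "s k' \<noteq> 0" using fC fz by blast
  obtain m where m: "g m = D" "s m \<noteq> 0" using fD fz by blast
  have "B \<le> C" using d B_def C_def by (simp add: algebra_simps)
  then have "g 0 < g k'" using g0 AB k' by simp
  then have k1: "k' \<ge> 1" using g by (metis le0 less_le_not_le strict_mono_less_eq not_less_eq_eq One_nat_def)
  have "C < D" using C_def D_def u(1) by simp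
  then have "k' < m" using g k' m by (metis strict_mono_less)
  then have "g (Suc k') \<le> g m" using g by (simp add: strict_mono_less_eq)
  then have le: "g (Suc k') - g k' \<le> g m - g k'" by (rule diff_right_mono)
  have "u1 - u0 < g (Suc k') - g k'" using gap k1 delta by metis
  also note le
  finally have "u1 - u0 < D - C" using k' m by simp
  then show False using C_def D_def by (simp add: algebra_simps)
qed

lemma get_info:
  fixes p :: "'g::linordered_ab_group_add \<Rightarrow> 'a::idom"
  assumes pS: "p \<in> series_set S" and nm: "\<not> monomial_in S p" and sd: "semidomain S"
  shows "(\<forall>h. p h \<in> S) \<and> (\<exists>u0 u1. u0 < u1 \<and> p u0 \<noteq> 0 \<and> p u1 \<noteq> 0 \<and>
     (\<forall>x. p x \<noteq> 0 \<longrightarrow> u0 \<le> x) \<and> (\<forall>x. p x \<noteq> 0 \<longrightarrow> x < u1 \<longrightarrow> x = u0))"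
proof -
  obtain a u where p: "p = series_of a u" and aS: "\<forall>i. a i \<in> S" and u: "strict_mono u"
    and az: "\<forall>i. a i = 0 \<longrightarrow> a (Suc i) = 0"
    using pS unfolding series_set_def by blast
  have S0: "0 \<in> S" using sd by (simp add: semidomain_def)
  have nz: "\<And>h. p h \<noteq> 0 \<longleftrightarrow> (\<exists>i. u i = h \<and> a i \<noteq> 0)" using series_of_nz[OF u] p by blast
  have at: "\<And>i. p (u i) = a i" using series_of_at[OF u] p by blast
  have inS: "\<forall>h. p h \<in> S" using aS S0 p unfolding series_of_def by auto
  have a0: "a 0 \<noteq> 0"
  proof
    assume "a 0 = 0"
    then have "\<forall>i. a i = 0" using down[OF az] by blast
    then have "p = (\<lambda>h. if h = u 0 then 0 else 0)" using nz by auto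
    then show False using nm S0 unfolding monomial_in_def by blast
  qed
  have a1: "a 1 \<noteq> 0"
  proof
    assume "a 1 = 0"
    then have "\<forall>i\<ge>1. a i = 0" using down[OF az] by blast
    then have "p = (\<lambda>h. if h = u 0 then a 0 else 0)"
    proof -
      assume z: "\<forall>i\<ge>1. a i = 0"
      show ?thesis
      proof
        fix h show "p h = (if h = u 0 then a 0 else 0)"
          using z nz at by (metis less_one not_le)
      qed
    qed
    then show False using nm aS unfolding monomial_in_def by blast
  qed
  have "u 0 < u 1" using u by (simp add: strict_mono_def)
  moreover have "\<forall>x. p x \<noteq> 0 \<longrightarrow> u 0 \<le> x" using nz u by (metis le0 strict_mono_less_eq)
  moreover have "\<forall>x. p x \<noteq> 0 \<longrightarrow> x < u 1 \<longrightarrow> x = u 0"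
    using nz u by (metis less_one strict_mono_less)
  ultimately show ?thesis using inS a0 a1 at by metis
qed

theorem lemma4p2:
  fixes S :: "'a::idom set" and s :: "nat \<Rightarrow> 'a" and g :: "nat \<Rightarrow> 'g::linordered_ab_group_add"
  assumes "semidomain S" and "add_reduced S"
    and "\<forall>i. s i \<in> S" and "strict_mono g" and "\<forall>i. s i = 0 \<longrightarrow> s (Suc i) = 0"
    and "series_of s g \<noteq> (\<lambda>_. 0)"
    and "\<forall>i\<ge>1. g 1 - g 0 < g (Suc i) - g i"
  shows "monolithic S (series_of s g)"
  unfolding monolithic_def
proof (intro conjI ballI impI)
  show "series_of s g \<noteq> (\<lambda>_. 0)" using assms(6) .
  fix p q assume pS: "p \<in> series_set S" and qS: "q \<in> series_set S" and f: "series_of s g = series_mult p q"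
  show "monomial_in S p \<or> monomial_in S q"
  proof (rule ccontr)
    assume "\<not> ?thesis"
    then have np: "\<not> monomial_in S p" and nq: "\<not> monomial_in S q" by auto
    obtain u0 u1 where pin: "\<forall>h. p h \<in> S" and u: "u0 < u1" "p u0 \<noteq> 0" "p u1 \<noteq> 0"
      "\<forall>x. p x \<noteq> 0 \<longrightarrow> u0 \<le> x" "\<forall>x. p x \<noteq> 0 \<longrightarrow> x < u1 \<longrightarrow> x = u0"
      using get_info[OF pS np assms(1)] by blast
    obtain v0 v1 where qin: "\<forall>h. q h \<in> S" and v: "v0 < v1" "q v0 \<noteq> 0" "q v1 \<noteq> 0"
      "\<forall>x. q x \<noteq> 0 \<longrightarrow> v0 \<le> x" "\<forall>x. q x \<noteq> 0 \<longrightarrow> x < v1 \<longrightarrow> x = v0"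
      using get_info[OF qS nq assms(1)] by blast
    show False
    proof (cases "u1 - u0 \<le> v1 - v0")
      case True
      show False by (rule core[OF assms(1,2) pin qin u v True f assms(4,5,6,7)])
    next
      case False
      then have d: "v1 - v0 \<le> u1 - u0" by simp
      have f': "series_of s g = series_mult q p" using f mult_comm by metis
      show False by (rule core[OF assms(1,2) qin pin v u d f' assms(4,5,6,7)])
    qed
  qed
qed

end
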